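(* Let $p(x,y)\not\equiv0$ be a real polynomial with $p(0,0)=0$, $\nabla p(0,0)=(0,0)$, such that every main $A'$-quasi-homogeneous form of $p$ ($A'\in\mathbb{N}^2$) consisting of one or two terms is nonnegative on $\mathbb{R}^2$ and nondegenerate in the weak sense. Let $A=(A_1,A_2)\in\mathcal{A}_p$ and suppose the exponent vectors $k$ of $p$ take exactly two values $B_1^A<B_2^A$ of $\langle A,k\rangle$, so that $p=\varphi_1^A+\varphi_2^A$. Suppose there is $u_0\in U_p(A)$ which is a root of $g_1^A$ of even multiplicity $k\ge2$ and a root of $g_2^A$ of multiplicity exactly $1$. Then $(0,0)$ is not a point of local minimum of $p$.
   Context: $\mathbb{N}=\{1,2,\dots\}$; $\mathbb{N}_0^2$ is the set of $(A_1,A_2)\in\mathbb{N}^2$ with $\gcd(A_1,A_2)=1$. $N_p$ is the support of $p$. For $A'\in\mathbb{N}^2$, the main $A'$-quasi-homogeneous form of $p$ is the sum of the terms of $p$ whose exponent vectors $k$ minimize $\langle A',k\rangle$ over $N_p$. A function $f$ is nondegenerate in the weak sense if $f(x,y)\ne0$ whenever $x\ne0,y\ne0$. For $A\in\mathbb{N}_0^2$, $\varphi_j^A$ is the sum of terms of $p$ with $\langle A,k\rangle=B_j^A$ ($B_1^A<B_2^A<\dots$ the distinct values on $N_p$), so $\varphi_1^A$ is the main $A$-form. For such a form $\sum_ic_ix^{\gamma_i}y^{\delta_i}$ ($c_i\ne0$, $\gamma_1>\gamma_2>\dots$) the characteristic polynomial is $\sum_ic_iu^{(\gamma_1-\gamma_i)/A_2}$;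 $g_1^A,g_2^A$ are those of $\varphi_1^A,\varphi_2^A$. $\mathcal{A}_p$ is the set of $A\in\mathbb{N}_0^2$ such that $\varphi_1^A$ has at least three terms, $g_1^A\ge0$ on $\mathbb{R}$, and $g_1^A$ has a real root; $U_p(A)$ is the set of real roots of $g_1^A$. Local minimum at $(0,0)$ means $p\ge p(0,0)$ near $(0,0)$. *)

theory Defs
  imports "HOL-Analysis.Analysis" "HOL-Computational_Algebra.Polynomial"
begin

text \<open>A real polynomial in two variables is represented by its coefficient function
  c :: nat \<times> nat \<Rightarrow> real with finite support; the exponent vector (a,b) stands for x^a y^b.\<close>

definition supp :: "(nat \<times> nat \<Rightarrow> real) \<Rightarrow> (nat \<times> nat) set" where
  "supp c = {k. c k \<noteq> 0}"

definition peval :: "(nat \<times> nat \<Rightarrow> real) \<Rightarrow> real \<Rightarrow> real \<Rightarrow> real" where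
  "peval c x y = (\<Sum>k\<in>supp c. c k * x ^ fst k * y ^ snd k)"

definition wt :: "nat \<times> nat \<Rightarrow> nat \<times> nat \<Rightarrow> nat" where
  "wt A k = fst A * fst k + snd A * snd k"

definition restr :: "(nat \<times> nat \<Rightarrow> real) \<Rightarrow> (nat \<times> nat) set \<Rightarrow> (nat \<times> nat \<Rightarrow> real)" where
  "restr c S k = (if k \<in> S then c k else 0)"

definition main_form :: "(nat \<times> nat \<Rightarrow> real) \<Rightarrow> nat \<times> nat \<Rightarrow> (nat \<times> nat \<Rightarrow> real)" where
  "main_form c A = restr c {k \<in> supp c. wt A k = Min (wt A ` supp c)}"

definition Bval :: "(nat \<times> nat \<Rightarrow> real) \<Rightarrow> nat \<times> nat \<Rightarrow> nat \<Rightarrow> nat" where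
  "Bval c A j = sorted_list_of_set (wt A ` supp c) ! (j - 1)"

definition phi :: "(nat \<times> nat \<Rightarrow> real) \<Rightarrow> nat \<times> nat \<Rightarrow> nat \<Rightarrow> (nat \<times> nat \<Rightarrow> real)" where
  "phi c A j = restr c {k \<in> supp c. wt A k = Bval c A j}"

definition charpoly :: "(nat \<times> nat \<Rightarrow> real) \<Rightarrow> nat \<times> nat \<Rightarrow> real poly" where
  "charpoly f A = (\<Sum>k\<in>supp f. monom (f k) ((Max (fst ` supp f) - fst k) div snd A))"

definition gA :: "(nat \<times> nat \<Rightarrow> real) \<Rightarrow> nat \<times> nat \<Rightarrow> nat \<Rightarrow> real poly" where
  "gA c A j = charpoly (phi c A j) A"

definition in_N02 :: "nat \<times> nat \<Rightarrow> bool" where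
  "in_N02 A \<longleftrightarrow> fst A > 0 \<and> snd A > 0 \<and> coprime (fst A) (snd A)"

definition nondeg_weak :: "(real \<Rightarrow> real \<Rightarrow> real) \<Rightarrow> bool" where
  "nondeg_weak f \<longleftrightarrow> (\<forall>x y. x \<noteq> 0 \<longrightarrow> y \<noteq> 0 \<longrightarrow> f x y \<noteq> 0)"

definition in_Ap :: "(nat \<times> nat \<Rightarrow> real) \<Rightarrow> nat \<times> nat \<Rightarrow> bool" where
  "in_Ap c A \<longleftrightarrow> in_N02 A \<and> card (supp (phi c A 1)) \<ge> 3
     \<and> (\<forall>u. poly (gA c A 1) u \<ge> 0) \<and> (\<exists>u. poly (gA c A 1) u = 0)"

definition Up :: "(nat \<times> nat \<Rightarrow> real) \<Rightarrow> nat \<times> nat \<Rightarrow> real set" where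
  "Up c A = {u. poly (gA c A 1) u = 0}"

definition local_min_at0 :: "(real \<Rightarrow> real \<Rightarrow> real) \<Rightarrow> bool" where
  "local_min_at0 f \<longleftrightarrow> (\<forall>\<^sub>F z in nhds (0::real, 0::real). f (fst z) (snd z) \<ge> f 0 0)"

end

theory Submission
  imports Defs
begin

lemma aux_ac:
  fixes F S T V W Y X :: real
  assumes "X * X = 1"
  shows "F * (S * T) * (V * W * Y) = T * Y * (S * X) * V * (F * (X * W))"
proof -
  have "T * Y * (S * X) * V * (F * (X * W)) = (F * (S * T) * (V * W * Y)) * (X * X)"
    by (simp only: mult_ac)
  thus ?thesis using assms by simp
qed

lemma form_eval:
  fixes f :: "nat \<times> nat \<Rightarrow> real" and \<sigma> :: real
  assumes fin: "finite (supp f)" and ne: "supp f \<noteq> {}"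
    and hom: "\<And>k. k \<in> supp f \<Longrightarrow> wt A k = B"
    and a0: "fst A > 0" and b0: "snd A > 0" and cop: "coprime (fst A) (snd A)"
    and sg: "\<sigma> * \<sigma> = 1"
  shows "\<exists>M d. \<forall>t v. peval f (\<sigma> * t ^ fst A) (v * t ^ snd A)
            = t ^ B * \<sigma> ^ M * v ^ d * poly (charpoly f A) (\<sigma> ^ snd A * v ^ fst A)"
proof -
  define a where "a = fst A"
  define b where "b = snd A"
  define M where "M = Max (fst ` supp f)"
  have "M \<in> fst ` supp f" unfolding M_def using fin ne by simp
  then obtain k0 where k0: "k0 \<in> supp f" "fst k0 = M" by auto
  have key: "f k * (\<sigma> * t ^ a) ^ fst k * (v * t ^ b) ^ snd k
      = t ^ B * \<sigma> ^ M * v ^ snd k0 * (f k * (\<sigma> ^ b * v ^ a) ^ ((M - fst k) div b))"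
    if k: "k \<in> supp f" for k t v
  proof -
    have le: "fst k \<le> M" unfolding M_def using fin k by simp
    have w1: "a * fst k + b * snd k = B" using hom[OF k] unfolding wt_def a_def b_def .
    have w0: "a * M + b * snd k0 = B" using hom[OF k0(1)] k0(2) unfolding wt_def a_def b_def by simp
    have "b * snd k0 \<le> b * snd k" using w1 w0 le
      by (metis add_le_cancel_right mult_le_mono2 nat_add_left_cancel_le)
    hence sk: "snd k0 \<le> snd k" using b0 b_def by simp
    have eq: "a * (M - fst k) = b * (snd k - snd k0)"
      using w1 w0 le sk by (simp add: diff_mult_distrib2 algebra_simps)
    have "b dvd a * (M - fst k)" using eq by simp
    hence "b dvd (M - fst k)" using cop unfolding a_def b_def
      by (metis coprime_commute coprime_dvd_mult_right_iff)
    then obtain mk where mk: "M - fst k = b * mk" by blast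
    have mkd: "(M - fst k) div b = mk" using mk b0 b_def by simp
    have Mk: "M = fst k + b * mk" using mk le by simp
    have "b * (a * mk) = b * (snd k - snd k0)" using eq mk by (simp add: mult_ac)
    hence "snd k - snd k0 = a * mk" using b0 b_def by simp
    hence sk2: "snd k = snd k0 + a * mk" using sk by linarith
    have ss: "\<sigma> ^ (b * mk) * \<sigma> ^ (b * mk) = 1"
      by (metis power_mult_distrib sg power_one)
    have e1: "(\<sigma> * t ^ a) ^ fst k = \<sigma> ^ fst k * t ^ (a * fst k)"
      by (simp add: power_mult_distrib power_mult)
    have e2: "(v * t ^ b) ^ (snd k0 + a * mk) = v ^ snd k0 * v ^ (a * mk) * t ^ (b * (snd k0 + a * mk))"
      by (simp only: power_mult_distrib power_mult power_add mult_ac)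
    have e3: "(\<sigma> ^ b * v ^ a) ^ mk = \<sigma> ^ (b * mk) * v ^ (a * mk)"
      by (simp add: power_mult_distrib power_mult)
    have e4: "t ^ B = t ^ (a * fst k) * t ^ (b * (snd k0 + a * mk))"
      using w1 sk2 by (simp only: power_add[symmetric])
    have e5: "\<sigma> ^ (fst k + b * mk) = \<sigma> ^ fst k * \<sigma> ^ (b * mk)"
      by (simp only: power_add)
    show ?thesis
      unfolding mkd unfolding Mk sk2 e1 e2 e3 e4 e5 using ss by (rule aux_ac)
  qed
  show ?thesis
  proof (intro exI allI)
    fix t v
    show "peval f (\<sigma> * t ^ fst A) (v * t ^ snd A)
            = t ^ B * \<sigma> ^ M * v ^ snd k0 * poly (charpoly f A) (\<sigma> ^ snd A * v ^ fst A)"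
      unfolding peval_def charpoly_def poly_sum poly_monom sum_distrib_left
      by (rule sum.cong[OF refl]) (use key in \<open>simp add: a_def b_def M_def\<close>)
  qed
qed


lemma charpoly0:
  fixes f :: "nat \<times> nat \<Rightarrow> real"
  assumes fin: "finite (supp f)" and ne: "supp f \<noteq> {}"
    and hom: "\<And>k. k \<in> supp f \<Longrightarrow> wt A k = B"
    and a0: "fst A > 0" and b0: "snd A > 0" and cop: "coprime (fst A) (snd A)"
  shows "poly (charpoly f A) 0 \<noteq> 0"
proof -
  define a where "a = fst A"
  define b where "b = snd A"
  define M where "M = Max (fst ` supp f)"
  have "M \<in> fst ` supp f" unfolding M_def using fin ne by simp
  then obtain k0 where k0: "k0 \<in> supp f" "fst k0 = M" by auto
  have key: "(M - fst k) div b \<noteq> 0"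
    if k: "k \<in> supp f" "k \<noteq> k0" for k
  proof
    assume d0: "(M - fst k) div b = 0"
    have le: "fst k \<le> M" unfolding M_def using fin k by simp
    have w1: "a * fst k + b * snd k = B" using hom[OF k(1)] unfolding wt_def a_def b_def .
    have w0: "a * M + b * snd k0 = B" using hom[OF k0(1)] k0(2) unfolding wt_def a_def b_def by simp
    have "b * snd k0 \<le> b * snd k" using w1 w0 le
      by (metis add_le_cancel_right mult_le_mono2 nat_add_left_cancel_le)
    hence sk: "snd k0 \<le> snd k" using b0 b_def by simp
    have eq: "a * (M - fst k) = b * (snd k - snd k0)"
      using w1 w0 le sk by (simp add: diff_mult_distrib2 algebra_simps)
    have "b dvd a * (M - fst k)" using eq by simp
    hence "b dvd (M - fst k)" using cop unfolding a_def b_def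
      by (metis coprime_commute coprime_dvd_mult_right_iff)
    then obtain mk where mk: "M - fst k = b * mk" by blast
    have "mk = 0" using mk d0 b0 b_def by simp
    hence "fst k = M" "snd k = snd k0" using mk le eq b0 b_def sk by auto
    thus False using k0 k by (metis prod_eqI)
  qed
  have "poly (charpoly f A) 0 = (\<Sum>k\<in>supp f. f k * 0 ^ ((M - fst k) div b))"
    unfolding charpoly_def poly_sum poly_monom M_def b_def ..
  also have "\<dots> = f k0 * 0 ^ ((M - fst k0) div b) + (\<Sum>k\<in>supp f - {k0}. f k * 0 ^ ((M - fst k) div b))"
    using fin k0 by (simp add: sum.remove)
  also have "(\<Sum>k\<in>supp f - {k0}. f k * 0 ^ ((M - fst k) div b)) = 0"
    using key by (intro sum.neutral) auto
  finally show ?thesis using k0 by (simp add: supp_def)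
qed

lemma supp_restr: "S \<subseteq> supp c \<Longrightarrow> supp (restr c S) = S"
  unfolding supp_def restr_def by auto

lemma peval_restr: "S \<subseteq> supp c \<Longrightarrow> peval (restr c S) x y = (\<Sum>k\<in>S. c k * x ^ fst k * y ^ snd k)"
  unfolding peval_def supp_restr by (intro sum.cong) (auto simp: restr_def)

lemma split2:
  assumes fin: "finite (supp c)" and W: "wt A ` supp c = {B1, B2}" and ne: "B1 \<noteq> B2"
  shows "peval c x y = peval (restr c {k\<in>supp c. wt A k = B1}) x y + peval (restr c {k\<in>supp c. wt A k = B2}) x y"
proof -
  have U: "supp c = {k\<in>supp c. wt A k = B1} \<union> {k\<in>supp c. wt A k = B2}" using W by auto
  show ?thesis
    unfolding peval_restr[of "{k\<in>supp c. wt A k = B1}" c, simplified]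
      peval_restr[of "{k\<in>supp c. wt A k = B2}" c, simplified]
    apply (subst peval_def, subst U)
    apply (rule sum.union_disjoint)
    using fin ne by auto
qed

lemma sl2: "(a::nat) < b \<Longrightarrow> sorted_list_of_set {a, b} = [a, b]"
  by simp


theorem mainTheorem15:
  fixes c :: "nat \<times> nat \<Rightarrow> real" and A :: "nat \<times> nat" and u0 :: real
  assumes fin: "finite (supp c)"
    and nonzero: "supp c \<noteq> {}"
    and p00: "peval c 0 0 = 0"
    and grad: "((\<lambda>z. peval c (fst z) (snd z)) has_derivative (\<lambda>h. 0)) (at (0, 0))"
    and forms: "\<And>A'. fst A' > 0 \<Longrightarrow> snd A' > 0 \<Longrightarrow>
         card (supp (main_form c A')) \<in> {1, 2} \<Longrightarrow>
         (\<forall>x y. peval (main_form c A') x y \<ge> 0) \<and> nondeg_weak (peval (main_form c A'))"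
    and AAp: "in_Ap c A"
    and two: "card (wt A ` supp c) = 2"
    and u0U: "u0 \<in> Up c A"
    and mult1: "even (order u0 (gA c A 1)) \<and> order u0 (gA c A 1) \<ge> 2"
    and mult2: "order u0 (gA c A 2) = 1"
  shows "\<not> local_min_at0 (peval c)"
proof
  assume lm: "local_min_at0 (peval c)"
  define a where "a = fst A"
  define b where "b = snd A"
  have a0: "a > 0" and b0: "b > 0" and cop: "coprime a b" and c3: "card (supp (phi c A 1)) \<ge> 3"
    using AAp unfolding in_Ap_def in_N02_def a_def b_def by auto
  obtain B1 B2 where W: "wt A ` supp c = {B1, B2}" and B12: "B1 < B2"
  proof -
    obtain x y where xy: "wt A ` supp c = {x, y}" "x \<noteq> y" using two card_2_iff by metis
    show ?thesis
    proof (cases "x < y")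
      case True thus ?thesis using that[of x y] xy by blast
    next
      case False
      hence "y < x" using xy(2) by simp
      moreover have "wt A ` supp c = {y, x}" using xy(1) by (simp add: insert_commute)
      ultimately show ?thesis using that[of y x] by blast
    qed
  qed
  have Bv1: "Bval c A 1 = B1" and Bv2: "Bval c A 2 = B2"
    unfolding Bval_def W using B12 by simp_all
  define S1 where "S1 = {k\<in>supp c. wt A k = B1}"
  define S2 where "S2 = {k\<in>supp c. wt A k = B2}"
  define f1 where "f1 = phi c A 1"
  define f2 where "f2 = phi c A 2"
  have f1d: "f1 = restr c S1" unfolding f1_def phi_def Bv1 S1_def ..
  have f2d: "f2 = restr c S2" unfolding f2_def phi_def Bv2 S2_def ..
  have sf1: "supp f1 = S1" unfolding f1d by (rule supp_restr) (auto simp: S1_def)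
  have sf2: "supp f2 = S2" unfolding f2d by (rule supp_restr) (auto simp: S2_def)
  have split: "peval c x y = peval f1 x y + peval f2 x y" for x y
    unfolding f1d f2d S1_def S2_def using split2[OF fin W] B12 by simp
  have fin1: "finite (supp f1)" and fin2: "finite (supp f2)" using fin unfolding sf1 sf2 S1_def S2_def by auto
  have ne1: "supp f1 \<noteq> {}" using c3 f1_def by auto
  have "B2 \<in> wt A ` supp c" using W by simp
  hence ne2: "supp f2 \<noteq> {}" unfolding sf2 S2_def by auto
  have hom1: "\<And>k. k \<in> supp f1 \<Longrightarrow> wt A k = B1" and hom2: "\<And>k. k \<in> supp f2 \<Longrightarrow> wt A k = B2"
    unfolding sf1 sf2 S1_def S2_def by auto
  define g1 where "g1 = gA c A 1"
  define g2 where "g2 = gA c A 2"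
  have g1d: "g1 = charpoly f1 A" unfolding g1_def gA_def f1_def ..
  have g2d: "g2 = charpoly f2 A" unfolding g2_def gA_def f2_def ..
  have g10: "poly g1 0 \<noteq> 0" unfolding g1d
    using charpoly0[OF fin1 ne1 hom1] a0 b0 cop unfolding a_def b_def by blast
  have g20: "poly g2 0 \<noteq> 0" unfolding g2d
    using charpoly0[OF fin2 ne2 hom2] a0 b0 cop unfolding a_def b_def by blast
  have g1u0: "poly g1 u0 = 0" using u0U unfolding Up_def g1_def by simp
  have u0nz: "u0 \<noteq> 0" using g1u0 g10 by auto
  have "[:-u0,1:]^2 dvd g1"
    using order_1[of u0 g1] mult1 le_imp_power_dvd dvd_trans unfolding g1_def by blast
  then obtain r1 where r1: "g1 = [:-u0,1:]^2 * r1" by (elim dvdE)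
  have pg1: "poly g1 w = (w - u0)^2 * poly r1 w" for w unfolding r1 by (simp add: poly_power)
  have g2nz: "g2 \<noteq> 0" using g20 by auto
  obtain q2 where q2: "g2 = [:-u0,1:] ^ order u0 g2 * q2" "\<not> [:-u0,1:] dvd q2"
    using order_decomp[OF g2nz] by blast
  have g2f: "g2 = [:-u0,1:] * q2" using q2(1) mult2 unfolding g2_def by simp
  have pg2: "poly g2 w = (w - u0) * poly q2 w" for w
    unfolding g2f by (simp add: algebra_simps)
  have q2u0: "poly q2 u0 \<noteq> 0" using q2(2) poly_eq_0_iff_dvd by blast
  obtain \<sigma> v0 :: real where sg: "\<sigma> * \<sigma> = 1" and v0nz: "v0 \<noteq> 0" and wv0: "\<sigma> ^ b * v0 ^ a = u0"
  proof (cases "u0 > 0")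
    case True
    show ?thesis using that[of 1 "root a u0"] True a0 real_root_pow_pos by auto
  next
    case False
    hence neg: "u0 < 0" using u0nz by auto
    show ?thesis
    proof (cases "odd a")
      case True
      have "(- root a (- u0)) ^ a = - (root a (-u0) ^ a)" using True by (simp add: power_minus_odd)
      also have "\<dots> = u0" using real_root_pow_pos[of a "-u0"] a0 neg by simp
      finally show ?thesis using that[of 1 "- root a (- u0)"] neg a0 by auto
    next
      case False
      have "odd b"
      proof
        assume "even b"
        with False have "(2::nat) dvd gcd a b" by simp
        with cop show False by simp
      qed
      hence "(-1::real) ^ b = -1" by simp
      moreover have "root a (-u0) ^ a = -u0" using real_root_pow_pos[of a "-u0"] a0 neg by simp
      ultimately show ?thesis using that[of "-1" "root a (-u0)"] neg a0 by auto
    qed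
  qed
  have fe1: "\<exists>M d. \<forall>t v. peval f1 (\<sigma> * t ^ a) (v * t ^ b)
            = t ^ B1 * \<sigma> ^ M * v ^ d * poly g1 (\<sigma> ^ b * v ^ a)"
    unfolding a_def b_def g1d
    by (rule form_eval[OF fin1 ne1 hom1]) (use a0 b0 cop sg in \<open>auto simp: a_def b_def\<close>)
  then obtain M1 d1 where ev1a: "\<forall>t v. peval f1 (\<sigma> * t ^ a) (v * t ^ b)
            = t ^ B1 * \<sigma> ^ M1 * v ^ d1 * poly g1 (\<sigma> ^ b * v ^ a)" by (elim exE) (erule that)
  note ev1 = ev1a[rule_format]
  have fe2: "\<exists>M d. \<forall>t v. peval f2 (\<sigma> * t ^ a) (v * t ^ b)
            = t ^ B2 * \<sigma> ^ M * v ^ d * poly g2 (\<sigma> ^ b * v ^ a)"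
    unfolding a_def b_def g2d
    by (rule form_eval[OF fin2 ne2 hom2]) (use a0 b0 cop sg in \<open>auto simp: a_def b_def\<close>)
  then obtain M2 d2 where ev2a: "\<forall>t v. peval f2 (\<sigma> * t ^ a) (v * t ^ b)
            = t ^ B2 * \<sigma> ^ M2 * v ^ d2 * poly g2 (\<sigma> ^ b * v ^ a)" by (elim exE) (erule that)
  note ev2 = ev2a[rule_format]
  define S where "S v = \<sigma> ^ b * (\<Sum>i<a. v0 ^ (a - Suc i) * v ^ i)" for v
  have wS: "\<sigma> ^ b * v ^ a - u0 = (v - v0) * S v" for v
    unfolding S_def wv0[symmetric] right_diff_distrib[symmetric] power_diff_sumr2[of v a v0]
    by (simp only: mult_ac)
  have Sv0: "S v0 \<noteq> 0"
  proof -
    have "(\<Sum>i<a. v0 ^ (a - Suc i) * v0 ^ i) = (\<Sum>i<a. v0 ^ (a - 1))"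
      by (intro sum.cong refl) (simp add: power_add[symmetric])
    also have "\<dots> = real a * v0 ^ (a - 1)" by simp
    finally show ?thesis unfolding S_def using a0 v0nz sg by auto
  qed
  define E1 where "E1 v = \<sigma> ^ M1 * v ^ d1 * S v ^ 2 * poly r1 (\<sigma> ^ b * v ^ a)" for v
  define E2 where "E2 v = \<sigma> ^ M2 * v ^ d2 * S v * poly q2 (\<sigma> ^ b * v ^ a)" for v
  have E2v0: "E2 v0 \<noteq> 0" unfolding E2_def using Sv0 v0nz q2u0 wv0 sg
    by (auto simp: power_eq_0_iff)
  have P1: "peval f1 (\<sigma> * t ^ a) (v * t ^ b) = t ^ B1 * (v - v0)^2 * E1 v" for t v
    unfolding ev1 pg1 wS E1_def by (simp only: power_mult_distrib mult_ac)
  have P2: "peval f2 (\<sigma> * t ^ a) (v * t ^ b) = t ^ B2 * (v - v0) * E2 v" for t v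
    unfolding ev2 pg2 wS E2_def by (simp add: algebra_simps)
  define \<epsilon> :: real where "\<epsilon> = (if E2 v0 > 0 then -1 else 1)"
  have ee: "\<epsilon> * \<epsilon> = 1" unfolding \<epsilon>_def by auto
  have eneg: "\<epsilon> * E2 v0 < 0" unfolding \<epsilon>_def using E2v0 by auto
  define m where "m = B2 - B1 + 1"
  define G where "G t = \<epsilon> * (\<epsilon> * t * E1 (v0 + \<epsilon> * t ^ m) + E2 (v0 + \<epsilon> * t ^ m))" for t :: real
  have Pt: "peval c (\<sigma> * t ^ a) ((v0 + \<epsilon> * t ^ m) * t ^ b) = t ^ (B2 + m) * G t" for t
  proof -
    have "B1 + 2 * m = B2 + m + 1" unfolding m_def using B12 by simp
    hence pw: "t ^ B1 * (t ^ m)^2 = t ^ (B2 + m) * t"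
      by (metis power_add power_mult power_one_right mult.commute)
    have "peval c (\<sigma> * t ^ a) ((v0 + \<epsilon> * t ^ m) * t ^ b)
        = t ^ B1 * (\<epsilon> * t ^ m)^2 * E1 (v0 + \<epsilon> * t ^ m) + t ^ B2 * (\<epsilon> * t ^ m) * E2 (v0 + \<epsilon> * t ^ m)"
      unfolding split P1 P2 by simp
    also have "\<dots> = t ^ B1 * (t ^ m)^2 * E1 (v0 + \<epsilon> * t ^ m) + t ^ B2 * t ^ m * (\<epsilon> * E2 (v0 + \<epsilon> * t ^ m))"
      using ee by (simp add: power2_eq_square algebra_simps)
    also have "\<dots> = t ^ (B2 + m) * G t"
      unfolding pw G_def using ee by (simp add: algebra_simps power_add)
    finally show ?thesis .
  qed
  have contG: "continuous (at_right 0) G"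
    unfolding G_def E1_def E2_def S_def by (intro continuous_intros)
  have G0: "G 0 < 0" using eneg unfolding G_def using m_def by simp
  have "(G \<longlongrightarrow> G 0) (at_right 0)" using contG by (simp add: continuous_within)
  hence ev_neg: "\<forall>\<^sub>F t in at_right 0. G t < 0" using G0 order_tendstoD(2) by blast
  define \<gamma> where "\<gamma> t = (\<sigma> * t ^ a, (v0 + \<epsilon> * t ^ m) * t ^ b)" for t :: real
  have contg: "continuous (at_right 0) \<gamma>" unfolding \<gamma>_def by (intro continuous_intros)
  have "(\<gamma> \<longlongrightarrow> \<gamma> 0) (at_right 0)" using contg by (simp add: continuous_within)
  moreover have "\<gamma> 0 = (0, 0)" unfolding \<gamma>_def using a0 b0 by simp
  ultimately have lim: "filterlim \<gamma> (nhds (0, 0)) (at_right 0)" by simp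
  have "\<forall>\<^sub>F t in at_right 0. peval c (fst (\<gamma> t)) (snd (\<gamma> t)) \<ge> peval c 0 0"
    using eventually_compose_filterlim[OF lm[unfolded local_min_at0_def] lim] .
  hence ev_pos: "\<forall>\<^sub>F t in at_right 0. t ^ (B2 + m) * G t \<ge> 0"
    using p00 unfolding \<gamma>_def by (simp add: Pt)
  have "\<forall>\<^sub>F t in at_right 0. t ^ (B2 + m) * G t \<ge> 0 \<and> G t < 0 \<and> t > 0"
    using ev_pos ev_neg eventually_at_right_less[of 0] by eventually_elim auto
  then obtain t where t: "t ^ (B2 + m) * G t \<ge> 0" "G t < 0" "t > (0::real)"
    using eventually_happens'[OF trivial_limit_at_right_real] by blast
  have "t ^ (B2 + m) > 0" using t(3) by simp
  hence "t ^ (B2 + m) * G t < 0" using t(2) by (simp add: mult_pos_neg)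
  thus False using t(1) by simp
qed

end
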